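(* Let $K\subseteq\mathbb{R}^n$ be a closed proper convex cone with nonempty interior, $g:[0,\pi]\to\mathbb{R}$ continuous and strictly increasing, and $\psi(w)=\int_{K_1} g(\rho(w,y))\,d\sigma(y)$ for $w\in\mathcal{S}^{n-1}$. Then every local minimum point of $\psi$ on $\mathcal{S}^{n-1}$ lies in $\hat K\cup(-\hat K)$, and every global minimum point of $\psi$ lies in $K\cap\hat K$.
   Context: $\mathcal{S}^{n-1}$ is the Euclidean unit sphere in $\mathbb{R}^n$, $\sigma$ the normalized uniform measure on it, $\rho(w,y)=\arccos\langle w,y\rangle$ the geodesic distance. For $A\subseteq\mathbb{R}^n$, $A_1=A\cap\mathcal{S}^{n-1}$ and $\hat A=\{x\in\mathbb{R}^n:\langle x,v\rangle\ge 0\ \forall v\in A\}$. A convex cone is proper if it is contained in some closed halfspace through the origin. *)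

theory Defs
  imports "HOL-Analysis.Analysis"
begin

text \<open>Normalized uniform (rotation-invariant) probability measure on the unit sphere:
  the push-forward of the uniform probability measure on the unit ball under the
  radial projection x \<mapsto> x / norm x (cone-measure construction).\<close>
definition sphere_measure :: "'a::euclidean_space measure" where
  "sphere_measure = distr (uniform_measure lborel (ball 0 1)) borel (\<lambda>x. x /\<^sub>R norm x)"

definition geod :: "'a::euclidean_space \<Rightarrow> 'a \<Rightarrow> real" where
  "geod w y = arccos (w \<bullet> y)"

definition dual_cone :: "'a::euclidean_space set \<Rightarrow> 'a set" where
  "dual_cone A = {x. \<forall>v\<in>A. x \<bullet> v \<ge> 0}"

definition proper_cone :: "'a::euclidean_space set \<Rightarrow> bool" where
  "proper_cone K \<longleftrightarrow> (\<exists>a. a \<noteq> 0 \<and> K \<subseteq> {x. a \<bullet> x \<le> 0})"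

definition psi :: "('a::euclidean_space) set \<Rightarrow> (real \<Rightarrow> real) \<Rightarrow> 'a \<Rightarrow> real" where
  "psi K g w = (LINT y:(K \<inter> sphere 0 1)|sphere_measure. g (geod w y))"

end

theory Submission
  imports Defs
begin



typedef (overloaded) ('a::euclidean_space) bidx = "Basis :: 'a set"
  morphisms rep_b abs_b
  using nonempty_Basis by blast

instance bidx :: (euclidean_space) finite
proof
  have "(UNIV :: 'a bidx set) = abs_b ` (Basis :: 'a set)"
  proof -
    have "x \<in> abs_b ` (Basis :: 'a set)" for x :: "'a bidx" by (cases x) auto
    then show ?thesis by blast
  qed
  then show "finite (UNIV :: 'a bidx set)" by (metis finite_Basis finite_imageI)
qed

instantiation bidx :: (euclidean_space) linorder
begin
definition less_eq_bidx :: "'a bidx \<Rightarrow> 'a bidx \<Rightarrow> bool" where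
  "less_eq_bidx x y \<longleftrightarrow> to_nat x \<le> to_nat y"
definition less_bidx :: "'a bidx \<Rightarrow> 'a bidx \<Rightarrow> bool" where
  "less_bidx x y \<longleftrightarrow> to_nat x < to_nat y"
instance
proof
  fix x y z :: "'a bidx"
  show "(x < y) = (x \<le> y \<and> \<not> y \<le> x)" unfolding less_eq_bidx_def less_bidx_def by linarith
  show "x \<le> x" unfolding less_eq_bidx_def by simp
  show "x \<le> y \<Longrightarrow> y \<le> z \<Longrightarrow> x \<le> z" unfolding less_eq_bidx_def by linarith
  show "x \<le> y \<Longrightarrow> y \<le> x \<Longrightarrow> x = y" unfolding less_eq_bidx_def
    by (metis inj_to_nat injD le_antisym)
  show "x \<le> y \<or> y \<le> x" unfolding less_eq_bidx_def by linarith
qed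
end

instance bidx :: (euclidean_space) wellorder
proof
  fix P :: "'a bidx \<Rightarrow> bool" and a
  assume H: "\<And>x. (\<And>y. y < x \<Longrightarrow> P y) \<Longrightarrow> P x"
  have "\<forall>x. to_nat x = n \<longrightarrow> P x" for n
  proof (induction n rule: less_induct)
    case (less n)
    show ?case
    proof (intro allI impI)
      fix x :: "'a bidx" assume xn: "to_nat x = n"
      show "P x"
      proof (rule H)
        fix y assume "y < x"
        then have "to_nat y < n" using xn by (simp add: less_bidx_def)
        then show "P y" using less by blast
      qed
    qed
  qed
  then show "P a" by blast
qed

lemma rep_b_in: "rep_b i \<in> Basis" using rep_b by blast
lemma rep_b_inj: "inj rep_b" by (meson injI rep_b_inject)
lemma rep_b_image: "range rep_b = Basis"
  using type_definition.Rep_range[OF type_definition_bidx] by simp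

definition Tm :: "'a::euclidean_space \<Rightarrow> real^('a bidx)" where
  "Tm x = (\<chi> i. x \<bullet> rep_b i)"
definition Ti :: "real^('a::euclidean_space bidx) \<Rightarrow> 'a" where
  "Ti v = (\<Sum>i\<in>UNIV. (v $ i) *\<^sub>R rep_b i)"

lemma sum_bidx: "(\<Sum>i\<in>UNIV. f (rep_b i)) = (\<Sum>b\<in>(Basis::'a::euclidean_space set). f b)"
proof -
  have "sum f (Basis::'a set) = sum f (range rep_b)" by (simp only: rep_b_image)
  also have "\<dots> = sum (f \<circ> rep_b) UNIV" by (rule sum.reindex[OF rep_b_inj])
  finally show ?thesis by (simp add: comp_def)
qed

lemma prod_bidx: "(\<Prod>i\<in>UNIV. f (rep_b i)) = (\<Prod>b\<in>(Basis::'a::euclidean_space set). f b)"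
proof -
  have "prod f (Basis::'a set) = prod f (range rep_b)" by (simp only: rep_b_image)
  also have "\<dots> = prod (f \<circ> rep_b) UNIV" by (rule prod.reindex[OF rep_b_inj])
  finally show ?thesis by (simp add: comp_def)
qed

lemma Ti_Tm: "Ti (Tm x) = x"
  unfolding Ti_def Tm_def using sum_bidx[of "\<lambda>b. (x \<bullet> b) *\<^sub>R b"]
  by (simp add: euclidean_representation)

lemma inner_rep_b: "rep_b i \<bullet> rep_b j = (if i = j then 1 else 0)"
proof (cases "i = j")
  case True then show ?thesis using rep_b_in[of i] by simp
next
  case False then have "rep_b i \<noteq> rep_b j" by (simp add: rep_b_inject)
  then show ?thesis using False rep_b_in[of i] rep_b_in[of j] by (simp add: inner_not_same_Basis)
qed

lemma Ti_inner: "Ti v \<bullet> rep_b j = v $ j"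
proof -
  have "Ti v \<bullet> rep_b j = (\<Sum>i\<in>UNIV. v $ i * (rep_b i \<bullet> rep_b j))"
    unfolding Ti_def inner_sum_left by simp
  also have "\<dots> = (\<Sum>i\<in>UNIV. if i = j then v $ i else 0)"
    by (rule sum.cong) (simp_all add: inner_rep_b)
  also have "\<dots> = v $ j" by simp
  finally show ?thesis .
qed

lemma Tm_Ti: "Tm (Ti v) = v"
  unfolding Tm_def by (simp add: Ti_inner vec_eq_iff)

lemma linear_Tm: "linear Tm"
  by (rule linearI) (simp_all add: Tm_def vec_eq_iff inner_add_left)

lemma linear_Ti: "linear Ti"
proof (rule linearI)
  fix x y :: "real^'a bidx" and c :: real
  show "Ti (x + y) = Ti x + Ti y" unfolding Ti_def by (simp add: scaleR_add_left sum.distrib)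
  show "Ti (c *\<^sub>R x) = c *\<^sub>R Ti x" unfolding Ti_def by (simp add: scaleR_sum_right)
qed

lemma inner_Tm: "Tm x \<bullet> Tm y = x \<bullet> y"
proof -
  have "Tm x \<bullet> Tm y = (\<Sum>i\<in>UNIV. (x \<bullet> rep_b i) * (y \<bullet> rep_b i))"
    by (simp add: Tm_def inner_vec_def)
  also have "\<dots> = (\<Sum>b\<in>Basis. (x \<bullet> b) * (y \<bullet> b))"
    by (rule sum_bidx)
  also have "\<dots> = x \<bullet> y" by (rule euclidean_inner[symmetric])
  finally show ?thesis .
qed

lemma norm_Tm: "norm (Tm x) = norm x"
  by (simp add: norm_eq_sqrt_inner inner_Tm)

lemma cont_Tm: "continuous_on UNIV Tm"
  using linear_Tm by (intro linear_continuous_on) (simp add: linear_conv_bounded_linear)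
lemma cont_Ti: "continuous_on UNIV Ti"
  using linear_Ti by (intro linear_continuous_on) (simp add: linear_conv_bounded_linear)

lemma Tm_meas[measurable]: "Tm \<in> borel_measurable borel"
  by (rule borel_measurable_continuous_onI[OF cont_Tm])
lemma Ti_meas[measurable]: "Ti \<in> borel_measurable borel"
  by (rule borel_measurable_continuous_onI[OF cont_Ti])




lemma Basis_vec_range: "(Basis :: (real^'n) set) = range (\<lambda>i. axis i 1)"
  by (auto simp: Basis_vec_def)

lemma all_Basis_rep: "(\<forall>b\<in>(Basis::'a::euclidean_space set). P b) \<longleftrightarrow> (\<forall>i. P (rep_b i))"
  using rep_b_image by (metis rangeI rangeE)

lemma distr_Tm: "distr lborel borel (Tm :: 'a::euclidean_space \<Rightarrow> _) = lborel"
proof -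
  have "lborel = distr lborel borel (Tm :: 'a \<Rightarrow> _)"
  proof (rule lborel_eqI)
    fix l u :: "real^'a bidx"
    assume le: "\<And>b. b \<in> Basis \<Longrightarrow> l \<bullet> b \<le> u \<bullet> b"
    have le': "l$i \<le> u$i" for i using le[of "axis i 1"] by (simp add: inner_axis)
    have pre: "Tm -` box l u = box (Ti l) (Ti u)"
      by (auto simp: mem_box_cart mem_box all_Basis_rep Tm_def Ti_inner)
    have "emeasure (distr lborel borel Tm) (box l u) = emeasure lborel (box (Ti l) (Ti u))"
      by (simp add: emeasure_distr pre)
    also have "\<dots> = ennreal (\<Prod>b\<in>Basis. (Ti u - Ti l) \<bullet> b)"
      using le' by (simp add: emeasure_lborel_box_eq all_Basis_rep inner_diff_left Ti_inner)
    also have "(\<Prod>b\<in>Basis. (Ti u - Ti l) \<bullet> b) = (\<Prod>i\<in>UNIV. (Ti u - Ti l) \<bullet> rep_b i)"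
      by (rule prod_bidx[symmetric])
    also have "\<dots> = (\<Prod>i\<in>UNIV. (u - l) \<bullet> axis i 1)"
      by (simp add: inner_diff_left Ti_inner inner_axis)
    also have "\<dots> = (\<Prod>b\<in>Basis. (u - l) \<bullet> b)"
      unfolding Basis_vec_range
      by (subst prod.reindex) (auto simp: inj_on_def axis_eq_axis)
    finally show "emeasure (distr lborel borel Tm) (box l u) = ennreal (\<Prod>b\<in>Basis. (u - l) \<bullet> b)" .
  qed simp
  then show ?thesis by simp
qed

lemma distr_orth_vec:
  fixes R :: "real^'n::{finite,wellorder} \<Rightarrow> real^'n::_"
  assumes R: "orthogonal_transformation R"
  shows "distr lborel borel R = lborel"
proof -
  have Rm[measurable]: "R \<in> borel_measurable borel"
    using R by (intro borel_measurable_continuous_onI linear_continuous_on)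
      (metis orthogonal_transformation_linear linear_conv_bounded_linear)
  have "lborel = distr lborel borel R"
  proof (rule lborel_eqI)
    fix l u :: "real^'n::{finite,wellorder}"
    assume le: "\<And>b. b \<in> Basis \<Longrightarrow> l \<bullet> b \<le> u \<bullet> b"
    let ?S = "inv R ` box l u"
    have eq: "R -` box l u = ?S"
      using orthogonal_transformation_bij[OF R] by (simp add: bij_vimage_eq_inv_image)
    have Sl: "?S \<in> lmeasurable"
      by (rule measurable_orthogonal_image[OF orthogonal_transformation_inv[OF R]]) simp
    have Sm: "measure lebesgue ?S = measure lebesgue (box l u)"
      by (rule measure_orthogonal_image[OF orthogonal_transformation_inv[OF R]]) simp
    have Sb: "?S \<in> sets borel"
      unfolding eq[symmetric] using measurable_sets_borel[OF Rm, of "box l u"] by simp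
    have "emeasure (distr lborel borel R) (box l u) = emeasure lborel ?S"
      by (simp add: emeasure_distr eq)
    also have "\<dots> = emeasure lebesgue ?S"
      using Sb by simp
    also have "\<dots> = measure lebesgue ?S"
      using Sl by (rule emeasure_eq_measure2)
    also have "\<dots> = measure lebesgue (box l u)" by (rule arg_cong[OF Sm])
    also have "\<dots> = emeasure lebesgue (box l u)"
      by (rule emeasure_eq_measure2[symmetric]) simp
    also have "\<dots> = emeasure lborel (box l u)" by simp
    also have "\<dots> = ennreal (\<Prod>b\<in>Basis. (u - l) \<bullet> b)"
      using le by (simp add: emeasure_lborel_box_eq)
    finally show "emeasure (distr lborel borel R) (box l u) = ennreal (\<Prod>b\<in>Basis. (u - l) \<bullet> b)" .
  qed simp
  then show ?thesis by simp
qed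

lemma distr_lborel_isometry:
  fixes R :: "'a::euclidean_space \<Rightarrow> 'a"
  assumes lin: "linear R" and nr: "\<And>x. norm (R x) = norm x"
  shows "distr lborel borel R = lborel"
proof -
  define R' where "R' = Tm \<circ> R \<circ> Ti"
  have lin': "linear R'" unfolding R'_def
    by (intro linear_compose linear_Tm linear_Ti lin)
  have nTi: "norm (Ti v) = norm v" for v :: "real^'a bidx"
    using norm_Tm[of "Ti v"] by (simp add: Tm_Ti)
  have "orthogonal_transformation R'"
    unfolding orthogonal_transformation
    using lin' by (simp add: R'_def norm_Tm nr nTi)
  then have d': "distr lborel borel R' = lborel" by (rule distr_orth_vec)
  have Rm[measurable]: "R \<in> borel_measurable borel"
    using lin by (intro borel_measurable_continuous_onI linear_continuous_on)
      (simp add: linear_conv_bounded_linear)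
  have R'm[measurable]: "R' \<in> borel_measurable borel" unfolding R'_def by measurable
  have RR: "R = Ti \<circ> R' \<circ> Tm" by (simp add: R'_def fun_eq_iff Ti_Tm)
  have dTi: "distr lborel borel (Ti :: _ \<Rightarrow> 'a) = lborel"
  proof -
    have "distr lborel borel (Ti :: _ \<Rightarrow> 'a) = distr (distr lborel borel Tm) borel Ti"
      by (simp add: distr_Tm)
    also have "\<dots> = distr lborel borel (Ti \<circ> Tm)"
      by (rule distr_distr) simp_all
    also have "\<dots> = lborel"
      by (simp add: comp_def Ti_Tm distr_id2)
    finally show ?thesis .
  qed
  have "distr lborel borel R = distr (distr (distr lborel borel Tm) borel R') borel Ti"
    by (simp add: RR distr_distr comp_assoc)
  also have "\<dots> = lborel"
    by (simp add: distr_Tm d' dTi)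
  finally show ?thesis .
qed




lemma emeasure_open_pos:
  fixes U :: "'a::euclidean_space set"
  assumes "open U" "x \<in> U" shows "0 < emeasure lborel U"
proof -
  obtain e where "e>0" "ball x e \<subseteq> U" using assms openE by blast
  then obtain a b where ab: "x \<in> box a b" "box a b \<subseteq> U"
    using rational_boxes[OF \<open>e>0\<close>, of x] by (meson order_trans)
  then have "0 < emeasure lborel (box a b)"
    by (auto simp: emeasure_lborel_box_eq mem_box algebra_simps intro!: prod_pos)
  also have "\<dots> \<le> emeasure lborel U"
    using assms ab by (intro emeasure_mono) (auto intro: borel_open)
  finally show ?thesis .
qed

definition nrm :: "'a::euclidean_space \<Rightarrow> 'a" where "nrm x = x /\<^sub>R norm x"

lemma nrm_meas[measurable]: "nrm \<in> borel_measurable borel"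
  unfolding nrm_def by measurable

lemma sphere_measure_nrm: "sphere_measure = distr (uniform_measure lborel (ball 0 1)) borel nrm"
  unfolding sphere_measure_def nrm_def ..

lemma ball_fin: "emeasure lborel (ball (0::'a::euclidean_space) 1) \<noteq> \<infinity>"
  using emeasure_lborel_ball_finite[of "0::'a" 1] by (simp add: less_top)

lemma ball_pos: "emeasure lborel (ball (0::'a::euclidean_space) 1) \<noteq> 0"
  using emeasure_open_pos[of "ball (0::'a) 1" 0] by auto

lemma sets_sphere_measure[simp, measurable_cong]: "sets sphere_measure = sets borel"
  by (simp add: sphere_measure_nrm)

lemma space_sphere_measure[simp]: "space sphere_measure = UNIV"
  by (simp add: sphere_measure_nrm)

lemma emeasure_sphere_measure:
  assumes "A \<in> sets borel"
  shows "emeasure (sphere_measure :: 'a::euclidean_space measure) A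
     = emeasure lborel (ball 0 1 \<inter> nrm -` A) / emeasure lborel (ball (0::'a) 1)"
proof -
  have "emeasure (sphere_measure :: 'a measure) A = emeasure (uniform_measure lborel (ball (0::'a) 1)) (nrm -` A)"
    unfolding sphere_measure_nrm using assms
    by (subst emeasure_distr) (auto simp: measurable_cong_sets[OF sets_uniform_measure refl])
  also have "\<dots> = emeasure lborel (ball 0 1 \<inter> nrm -` A) / emeasure lborel (ball (0::'a) 1)"
    using assms by (subst emeasure_uniform_measure) (auto intro: measurable_sets_borel[OF nrm_meas])
  finally show ?thesis .
qed

lemma finite_measure_sphere: "finite_measure (sphere_measure :: 'a::euclidean_space measure)"
proof (rule finite_measureI)
  have "emeasure (sphere_measure :: 'a measure) (space sphere_measure)
     = emeasure lborel (ball 0 1 \<inter> nrm -` (UNIV::'a set)) / emeasure lborel (ball (0::'a) 1)"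
    by (simp add: emeasure_sphere_measure)
  also have "\<dots> = 1" using ball_fin ball_pos by (simp add: divide_eq_1_ennreal)
  finally show "emeasure (sphere_measure :: 'a measure) (space sphere_measure) \<noteq> \<infinity>" by simp
qed

lemma sphere_pos:
  fixes U :: "'a::euclidean_space set"
  assumes U: "open U" and p: "p \<in> U" "norm p = 1"
  shows "emeasure sphere_measure (U \<inter> sphere 0 1) \<noteq> 0"
proof -
  define V where "V = (ball (0::'a) 1 - {0}) \<inter> nrm -` U"
  have cont: "continuous_on (ball (0::'a) 1 - {0}) nrm"
    unfolding nrm_def by (intro continuous_intros) auto
  have oV: "open V" unfolding V_def
    using cont U by (subst (asm) continuous_on_open_vimage) (auto simp: Int_commute)
  have "p /\<^sub>R 2 \<in> V" using p by (auto simp: V_def nrm_def)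
  then have pos: "0 < emeasure lborel V" using emeasure_open_pos[OF oV] by blast
  have sub: "V \<subseteq> ball 0 1 \<inter> nrm -` (U \<inter> sphere 0 1)"
    by (auto simp: V_def nrm_def)
  have Us: "U \<inter> sphere 0 1 \<in> sets borel" using U by (intro sets.Int borel_open borel_closed) auto
  have "nrm -` (U \<inter> sphere 0 1) \<in> sets borel"
    using measurable_sets_borel[OF nrm_meas Us] by simp
  then have Ss: "ball 0 1 \<inter> nrm -` (U \<inter> sphere 0 1) \<in> sets lborel"
    by (intro sets.Int) auto
  have "emeasure lborel V \<le> emeasure lborel (ball 0 1 \<inter> nrm -` (U \<inter> sphere 0 1))"
    using sub Ss by (intro emeasure_mono) auto
  then have "0 < emeasure lborel (ball 0 1 \<inter> nrm -` (U \<inter> sphere 0 1))" using pos by simp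
  then show ?thesis
    using ball_fin[where 'a='a]
    by (subst emeasure_sphere_measure[OF Us]) (auto simp: ennreal_divide_eq_0_iff)
qed

lemma sphere_invariant:
  fixes R :: "'a::euclidean_space \<Rightarrow> 'a"
  assumes lin: "linear R" and nr: "\<And>x. norm (R x) = norm x"
  shows "distr sphere_measure borel R = sphere_measure"
proof -
  let ?M = "uniform_measure lborel (ball (0::'a) 1)"
  have Rm[measurable]: "R \<in> borel_measurable borel"
    using lin by (intro borel_measurable_continuous_onI linear_continuous_on)
      (simp add: linear_conv_bounded_linear)
  have Rball: "R -` ball 0 1 = ball 0 1" by (auto simp: nr)
  have dM: "distr ?M borel R = ?M"
  proof (rule measure_eqI)
    show "sets (distr ?M borel R) = sets ?M" by simp
    fix A assume "A \<in> sets (distr ?M borel R)"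
    then have A: "A \<in> sets borel" by simp
    have "emeasure (distr ?M borel R) A = emeasure ?M (R -` A)"
      using A by (subst emeasure_distr) (auto simp: measurable_cong_sets[OF sets_uniform_measure refl])
    also have "\<dots> = emeasure lborel (ball 0 1 \<inter> R -` A) / emeasure lborel (ball (0::'a) 1)"
      using A by (subst emeasure_uniform_measure) (auto intro: measurable_sets_borel[OF Rm])
    also have "ball 0 1 \<inter> R -` A = R -` (ball 0 1 \<inter> A)" using Rball by auto
    also have "emeasure lborel (R -` (ball 0 1 \<inter> A)) = emeasure (distr lborel borel R) (ball 0 1 \<inter> A)"
      using A by (subst emeasure_distr) auto
    also have "\<dots> = emeasure lborel (ball 0 1 \<inter> A)"
      by (simp add: distr_lborel_isometry[OF lin nr])
    also have "emeasure lborel (ball 0 1 \<inter> A) / emeasure lborel (ball (0::'a) 1) = emeasure ?M A"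
      using A by (subst emeasure_uniform_measure) auto
    finally show "emeasure (distr ?M borel R) A = emeasure ?M A" .
  qed
  have comm: "R \<circ> nrm = nrm \<circ> R"
    by (auto simp: fun_eq_iff nrm_def nr linear_cmul[OF lin])
  have Mm: "measurable ?M borel = measurable borel borel"
    by (rule measurable_cong_sets) auto
  have "distr sphere_measure borel R = distr ?M borel (R \<circ> nrm)"
    unfolding sphere_measure_nrm by (rule distr_distr) (auto simp: Mm)
  also have "\<dots> = distr (distr ?M borel R) borel nrm"
    unfolding comm by (rule distr_distr[symmetric]) (auto simp: Mm)
  also have "\<dots> = sphere_measure" by (simp add: dM sphere_measure_nrm)
  finally show ?thesis .
qed




definition clmp :: "real \<Rightarrow> real" where "clmp t = max (-1) (min 1 t)"
definition Gc :: "(real \<Rightarrow> real) \<Rightarrow> real \<Rightarrow> real" where "Gc g t = g (arccos (clmp t))"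

lemma clmp_bounds: "-1 \<le> clmp t" "clmp t \<le> 1" by (auto simp: clmp_def)
lemma clmp_id: "-1 \<le> t \<Longrightarrow> t \<le> 1 \<Longrightarrow> clmp t = t" by (auto simp: clmp_def)

lemma arccos_clmp: "arccos (clmp t) \<in> {0..pi}"
  using arccos_bounded[OF clmp_bounds] by auto

lemma cont_Gc:
  assumes "continuous_on {0..pi} g" shows "continuous_on UNIV (Gc g)"
proof -
  have c1: "continuous_on UNIV clmp" unfolding clmp_def by (intro continuous_intros)
  have c2: "continuous_on UNIV (\<lambda>t. arccos (clmp t))"
    by (rule continuous_on_compose2[OF continuous_on_arccos' c1]) (auto simp: clmp_bounds)
  show ?thesis unfolding Gc_def
    by (rule continuous_on_compose2[OF assms c2]) (use arccos_clmp in auto)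
qed

lemma Gc_bounded:
  assumes "continuous_on {0..pi} g" shows "\<exists>B. \<forall>t. \<bar>Gc g t\<bar> \<le> B"
proof -
  have "compact (g ` {0..pi})" by (rule compact_continuous_image[OF assms]) simp
  then obtain B where B: "\<forall>x\<in>g ` {0..pi}. norm x \<le> B"
    using compact_imp_bounded bounded_iff by metis
  show ?thesis
  proof (intro exI allI)
    fix t show "\<bar>Gc g t\<bar> \<le> B" using B arccos_clmp[of t] by (simp add: Gc_def)
  qed
qed

lemma inner_le1: "norm (w::'a::euclidean_space) = 1 \<Longrightarrow> norm y = 1 \<Longrightarrow> -1 \<le> w \<bullet> y \<and> w \<bullet> y \<le> 1"
  using Cauchy_Schwarz_ineq2[of w y] by auto

lemma psi_eq:
  fixes K :: "'a::euclidean_space set"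
  assumes "norm w = 1"
  shows "psi K g w = (LINT y:(K \<inter> sphere 0 1)|sphere_measure. Gc g (w \<bullet> y))"
  unfolding psi_def set_lebesgue_integral_def
proof (rule Bochner_Integration.integral_cong[OF refl])
  fix y :: 'a
  show "indicator (K \<inter> sphere 0 1) y *\<^sub>R g (geod w y) = indicator (K \<inter> sphere 0 1) y *\<^sub>R Gc g (w \<bullet> y)"
  proof (cases "y \<in> K \<inter> sphere 0 1")
    case True
    then have "clmp (w \<bullet> y) = w \<bullet> y" using inner_le1[OF assms, of y] by (auto intro: clmp_id)
    then show ?thesis by (simp add: geod_def Gc_def)
  qed simp
qed




definition rfl :: "'a::euclidean_space \<Rightarrow> 'a \<Rightarrow> 'a" where
  "rfl h y = y - (2 * (h \<bullet> y)) *\<^sub>R h"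

lemma rfl_inner_h: "norm h = 1 \<Longrightarrow> h \<bullet> rfl h y = - (h \<bullet> y)"
  by (simp add: rfl_def inner_diff_right dot_square_norm)

lemma rfl_inner_gen: "rfl h w \<bullet> y = w \<bullet> y - 2 * (h \<bullet> w) * (h \<bullet> y)"
  unfolding rfl_def by (simp add: inner_diff_left)

lemma rfl_adj: "rfl h x \<bullet> y = x \<bullet> rfl h y"
  by (simp add: rfl_def inner_diff_left inner_diff_right inner_commute)

lemma rfl_rfl: "norm h = 1 \<Longrightarrow> rfl h (rfl h y) = y"
  by (simp add: rfl_def inner_diff_right dot_square_norm algebra_simps)

lemma rfl_norm: assumes "norm h = 1" shows "norm (rfl h y) = norm y"
proof -
  have "rfl h y \<bullet> rfl h y = y \<bullet> y" using rfl_adj[of h y "rfl h y"] rfl_rfl[OF assms] by simp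
  then show ?thesis by (simp add: norm_eq_sqrt_inner)
qed

lemma linear_rfl: "linear (rfl h)"
  by (rule linearI) (simp_all add: rfl_def inner_add_right algebra_simps)

lemma descent:
  fixes K :: "'a::euclidean_space set" and g :: "real \<Rightarrow> real"
  assumes K: "closed K" and gc: "continuous_on {0..pi} g" and gm: "strict_mono_on {0..pi} g"
    and h: "norm h = 1" and w: "norm w = 1" and hw: "h \<bullet> w < 0"
    and rK: "\<And>y. y \<in> K \<Longrightarrow> h \<bullet> y < 0 \<Longrightarrow> rfl h y \<in> K"
    and U: "open U" "p \<in> U" "norm p = 1"
    and Usub: "\<And>y. y \<in> U \<Longrightarrow> norm y = 1 \<Longrightarrow> y \<in> K \<and> h \<bullet> y > 0 \<and> rfl h y \<notin> K"
  shows "psi K g (rfl h w) < psi K g w"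
proof -
  let ?R = "rfl h"
  let ?M = "sphere_measure :: 'a measure"
  define G where "G = Gc g"
  define v where "v = ?R w"
  have nv: "norm v = 1" using rfl_norm[OF h] w by (simp add: v_def)
  define F where "F y = G (w \<bullet> y) - G (v \<bullet> y)" for y
  define A where "A = K \<inter> sphere (0::'a) 1"
  define S where "S = {y\<in>A. h \<bullet> y < 0}"
  interpret fm: finite_measure ?M by (rule finite_measure_sphere)
  have Gm[measurable]: "G \<in> borel_measurable borel"
    unfolding G_def by (rule borel_measurable_continuous_onI[OF cont_Gc[OF gc]])
  have Rm[measurable]: "?R \<in> borel_measurable borel"
    using linear_rfl[of h] by (intro borel_measurable_continuous_onI linear_continuous_on)
      (simp add: linear_conv_bounded_linear)
  have Ab[measurable]: "A \<in> sets borel" unfolding A_def using K by (intro borel_closed closed_Int) auto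
  have "S = A \<inter> {y. h \<bullet> y < 0}" by (auto simp: S_def)
  then have Sb[measurable]: "S \<in> sets borel"
    using Ab by (simp add: sets.Int open_halfspace_lt borel_open)
  have Fm[measurable]: "F \<in> borel_measurable borel" unfolding F_def by measurable
  obtain B where B: "\<And>t. \<bar>G t\<bar> \<le> B" using Gc_bounded[OF gc] G_def by metis
  have Fb: "\<bar>F y\<bar> \<le> 2 * B" for y using B[of "w \<bullet> y"] B[of "v \<bullet> y"] by (simp add: F_def)
  have intg: "integrable ?M f" if "f \<in> borel_measurable borel" "\<And>y. \<bar>f y\<bar> \<le> C" for f :: "'a \<Rightarrow> real" and C
    using that by (intro fm.integrable_const_bound[where B=C]) auto
  have ind_le: "\<bar>indicator X y * f\<bar> \<le> \<bar>f\<bar>" for X y and f :: real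
    by (simp add: indicator_def)
  have FR: "F (?R y) = - F y" for y
  proof -
    have "w \<bullet> ?R y = v \<bullet> y" by (simp add: v_def rfl_adj)
    moreover have "v \<bullet> ?R y = w \<bullet> y" by (simp add: v_def rfl_adj rfl_rfl[OF h])
    ultimately show ?thesis by (simp add: F_def)
  qed
  have FR': "F y = - F (?R y)" for y using FR[of "?R y"] by (simp add: rfl_rfl[OF h])
  have psi_w: "psi K g w = integral\<^sup>L ?M (\<lambda>y. indicator A y * G (w \<bullet> y))"
    using psi_eq[OF w, of K g] by (simp add: set_lebesgue_integral_def A_def G_def)
  have psi_v: "psi K g v = integral\<^sup>L ?M (\<lambda>y. indicator A y * G (v \<bullet> y))"
    using psi_eq[OF nv, of K g] by (simp add: set_lebesgue_integral_def A_def G_def)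
  have i1: "integrable ?M (\<lambda>y. indicator A y * G (w \<bullet> y))"
    by (rule intg[where C=B]) (auto intro: order_trans[OF ind_le B])
  have i2: "integrable ?M (\<lambda>y. indicator A y * G (v \<bullet> y))"
    by (rule intg[where C=B]) (auto intro: order_trans[OF ind_le B])
  have diff: "psi K g w - psi K g v = integral\<^sup>L ?M (\<lambda>y. indicator A y * F y)"
    unfolding psi_w psi_v
    by (subst Bochner_Integration.integral_diff[OF i1 i2, symmetric]) (simp add: F_def algebra_simps)
  have iA: "integrable ?M (\<lambda>y. indicator A y * F y)"
    by (rule intg[where C="2*B"]) (auto intro: order_trans[OF ind_le Fb])
  have iS: "integrable ?M (\<lambda>y. indicator S y * F y)"
    by (rule intg[where C="2*B"]) (auto intro: order_trans[OF ind_le Fb])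
  have iSR: "integrable ?M (\<lambda>y. indicator S (?R y) * F y)"
    by (rule intg[where C="2*B"]) (auto intro: order_trans[OF ind_le Fb])
  have key: "integral\<^sup>L ?M (\<lambda>y. indicator S (?R y) * F y) = - integral\<^sup>L ?M (\<lambda>y. indicator S y * F y)"
  proof -
    have "integral\<^sup>L ?M (\<lambda>y. indicator S (?R y) * F y)
        = integral\<^sup>L ?M (\<lambda>y. (\<lambda>z. indicator S z * (- F z)) (?R y))"
      by (subst FR') simp
    also have "\<dots> = integral\<^sup>L (distr ?M borel ?R) (\<lambda>z. indicator S z * (- F z))"
      by (rule integral_distr[symmetric]) auto
    also have "\<dots> = integral\<^sup>L ?M (\<lambda>z. indicator S z * (- F z))"
      by (simp add: sphere_invariant[OF linear_rfl rfl_norm[OF h]])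
    also have "\<dots> = - integral\<^sup>L ?M (\<lambda>y. indicator S y * F y)" by simp
    finally show ?thesis .
  qed
  define Gf where "Gf y = indicator A y * F y - indicator S y * F y - indicator S (?R y) * F y" for y
  have iGf: "integrable ?M Gf" unfolding Gf_def using iA iS iSR by simp
  have eqGf: "integral\<^sup>L ?M Gf = integral\<^sup>L ?M (\<lambda>y. indicator A y * F y)"
    unfolding Gf_def using iA iS iSR key by simp
  have Fpos: "F y > 0" if y: "norm y = 1" "h \<bullet> y > 0" for y
  proof -
    have a: "-1 \<le> w \<bullet> y \<and> w \<bullet> y \<le> 1" by (rule inner_le1[OF w y(1)])
    have b: "-1 \<le> v \<bullet> y \<and> v \<bullet> y \<le> 1" by (rule inner_le1[OF nv y(1)])
    have lt: "w \<bullet> y < v \<bullet> y"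
      using hw y(2) by (simp add: v_def rfl_inner_gen mult_neg_pos)
    have "arccos (v \<bullet> y) < arccos (w \<bullet> y)" using a b lt by (intro arccos_less_arccos) auto
    then have "g (arccos (v \<bullet> y)) < g (arccos (w \<bullet> y))"
      using a b by (intro strict_mono_onD[OF gm]) (auto intro: arccos_lbound arccos_ubound)
    then show ?thesis using a b by (simp add: F_def G_def Gc_def clmp_id)
  qed
  have Fnn: "F y \<ge> 0" if y: "norm y = 1" "h \<bullet> y \<ge> 0" for y
  proof (cases "h \<bullet> y = 0")
    case True
    then have "v \<bullet> y = w \<bullet> y" by (simp add: v_def rfl_inner_gen)
    then show ?thesis by (simp add: F_def)
  next
    case False then show ?thesis using Fpos[OF y(1)] y(2) by force
  qed
  have Gfnn: "Gf y \<ge> 0" for y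
  proof (cases "y \<in> S")
    case True
    then have "h \<bullet> ?R y > 0" by (simp add: S_def rfl_inner_h[OF h])
    then have "?R y \<notin> S" by (auto simp: S_def)
    then show ?thesis using True by (simp add: Gf_def S_def)
  next
    case yS: False
    show ?thesis
    proof (cases "?R y \<in> S")
      case True
      then have "?R y \<in> K" "h \<bullet> ?R y < 0" "norm (?R y) = 1" by (auto simp: S_def A_def)
      then have "y \<in> K" "norm y = 1" using rK[of "?R y"] by (auto simp: rfl_rfl[OF h] rfl_norm[OF h])
      then have "y \<in> A" by (simp add: A_def)
      then show ?thesis using True yS by (simp add: Gf_def)
    next
      case False
      show ?thesis
      proof (cases "y \<in> A")
        case True
        then have "norm y = 1" "h \<bullet> y \<ge> 0" using yS by (auto simp: A_def S_def)
        then show ?thesis using True yS False Fnn by (simp add: Gf_def)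
      qed (use yS False in \<open>simp add: Gf_def\<close>)
    qed
  qed
  have Gfpos: "Gf y > 0" if "y \<in> U \<inter> sphere 0 1" for y
  proof -
    from that have y1: "norm y = 1" "y \<in> U" by auto
    from Usub[OF y1(2,1)] have yK: "y \<in> K" "h \<bullet> y > 0" "?R y \<notin> K" by auto
    then have "y \<in> A" "y \<notin> S" "?R y \<notin> S" using y1 by (auto simp: A_def S_def)
    then show ?thesis using Fpos[OF y1(1) yK(2)] by (simp add: Gf_def)
  qed
  have "integral\<^sup>L ?M Gf \<noteq> 0"
  proof
    assume "integral\<^sup>L ?M Gf = 0"
    then have "AE y in ?M. Gf y = 0"
      using integral_nonneg_eq_0_iff_AE[OF iGf] Gfnn by auto
    then have ae: "AE y in ?M. y \<notin> U \<inter> sphere 0 1"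
      by eventually_elim (use Gfpos in fastforce)
    have "U \<inter> sphere 0 1 \<in> sets ?M" using U by (auto intro!: sets.Int borel_open borel_closed)
    then have "emeasure ?M (U \<inter> sphere 0 1) = 0"
      using ae by (subst (asm) AE_iff_measurable[of "U \<inter> sphere 0 1"]) auto
    with sphere_pos[OF U] show False by simp
  qed
  moreover have "integral\<^sup>L ?M Gf \<ge> 0" using Gfnn by simp
  ultimately have "integral\<^sup>L ?M Gf > 0" by simp
  then show ?thesis using diff eqGf by (simp add: v_def)
qed




lemma int_add:
  fixes K :: "'a::euclidean_space set"
  assumes K: "convex_cone K" and z: "z \<in> interior K" and k: "k \<in> K"
  shows "z + k \<in> interior K"
proof -
  obtain r where r: "r > 0" "ball z r \<subseteq> K" using z mem_interior by blast
  have "ball (z + k) r \<subseteq> K"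
  proof
    fix x assume "x \<in> ball (z + k) r"
    then have "x - k \<in> ball z r" by (simp add: dist_norm algebra_simps)
    then have "x - k \<in> K" using r by blast
    then have "(x - k) + k \<in> K" using convex_cone_add[OF K _ k] by blast
    then show "x \<in> K" by simp
  qed
  then show ?thesis using r mem_interior by blast
qed

lemma int_scale:
  fixes K :: "'a::euclidean_space set"
  assumes K: "convex_cone K" and z: "z \<in> interior K" and c: "c > 0"
  shows "c *\<^sub>R z \<in> interior K"
proof -
  obtain r where r: "r > 0" "ball z r \<subseteq> K" using z mem_interior by blast
  have "ball (c *\<^sub>R z) (c * r) \<subseteq> K"
  proof
    fix x assume "x \<in> ball (c *\<^sub>R z) (c * r)"
    then have "norm (c *\<^sub>R z - x) < c * r" by (simp add: dist_norm)
    moreover have "c *\<^sub>R z - x = c *\<^sub>R (z - x /\<^sub>R c)" using c by (simp add: algebra_simps)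
    ultimately have "c * norm (z - x /\<^sub>R c) < c * r" using c by simp
    then have "norm (z - x /\<^sub>R c) < r" using c by simp
    then have "x /\<^sub>R c \<in> K" using r by (auto simp: dist_norm)
    then have "c *\<^sub>R (x /\<^sub>R c) \<in> K" using convex_cone_scaleR[OF K, of c "x /\<^sub>R c"] c by linarith
    then show "x \<in> K" using c by simp
  qed
  then show ?thesis using r c mem_interior by (metis mult_pos_pos)
qed

lemma zero_notin_int:
  fixes K :: "'a::euclidean_space set"
  assumes "proper_cone K" shows "0 \<notin> interior K"
proof
  assume "0 \<in> interior K"
  then obtain r where r: "r > 0" "ball 0 r \<subseteq> K" using mem_interior by blast
  obtain a where a: "a \<noteq> 0" "K \<subseteq> {x. a \<bullet> x \<le> 0}" using assms by (auto simp: proper_cone_def)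
  let ?x = "(r / 2 / norm a) *\<^sub>R a"
  have "?x \<in> ball 0 r" using r a by (simp add: dist_norm)
  then have "a \<bullet> ?x \<le> 0" using r a by blast
  moreover have "a \<bullet> ?x = r / 2 * norm a" using a by (simp add: dot_square_norm power2_eq_square)
  moreover have "r / 2 * norm a > 0" using r a by simp
  ultimately show False by linarith
qed

lemma pos_on_int:
  fixes K :: "'a::euclidean_space set"
  assumes h: "norm h = 1" and nn: "\<And>y. y \<in> K \<Longrightarrow> h \<bullet> y \<ge> 0" and y: "y \<in> interior K"
  shows "h \<bullet> y > 0"
proof -
  obtain r where r: "r > 0" "ball y r \<subseteq> K" using y mem_interior by blast
  have "y - (r/2) *\<^sub>R h \<in> ball y r" using r h by (simp add: dist_norm)
  then have "h \<bullet> (y - (r/2) *\<^sub>R h) \<ge> 0" using r nn by blast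
  then have "h \<bullet> y - r/2 \<ge> 0" using h by (simp add: inner_diff_right dot_square_norm)
  then show ?thesis using r by simp
qed

lemma dist_rfl: "norm h = 1 \<Longrightarrow> dist (rfl h w) w = 2 * \<bar>h \<bullet> w\<bar>"
  by (simp add: rfl_def dist_norm)




lemma descent_int:
  fixes K :: "'a::euclidean_space set" and g :: "real \<Rightarrow> real"
  assumes K: "closed K" "convex_cone K" "proper_cone K"
    and gc: "continuous_on {0..pi} g" and gm: "strict_mono_on {0..pi} g"
    and h: "norm h = 1" "h \<in> interior K" and w: "norm w = 1" and hw: "h \<bullet> w < 0"
  shows "psi K g (rfl h w) < psi K g w"
proof -
  have hK: "h \<in> K" using h interior_subset by blast
  have rK: "rfl h y \<in> K" if "y \<in> K" "h \<bullet> y < 0" for y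
  proof -
    have "(- 2 * (h \<bullet> y)) *\<^sub>R h \<in> K" using that hK by (intro convex_cone_scaleR[OF K(2)]) auto
    then have "y + (- 2 * (h \<bullet> y)) *\<^sub>R h \<in> K" using convex_cone_add[OF K(2) that(1)] by blast
    then show ?thesis by (simp add: rfl_def)
  qed
  define U where "U = interior K \<inter> {y. h \<bullet> y > 0} \<inter> (rfl h -` (UNIV - K))"
  have contR: "continuous_on UNIV (rfl h)"
    using linear_rfl[of h] by (intro linear_continuous_on) (simp add: linear_conv_bounded_linear)
  have oU: "open U" unfolding U_def
    using K(1) contR by (intro open_Int open_interior open_halfspace_gt open_vimage) auto
  have mh: "- h \<notin> K"
  proof
    assume "- h \<in> K"
    then have "h + - h \<in> interior K" using int_add[OF K(2) h(2)] by blast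
    then show False using zero_notin_int[OF K(3)] by simp
  qed
  have "rfl h h = - h" using h by (simp add: rfl_def dot_square_norm scaleR_2 algebra_simps)
  then have pU: "h \<in> U" using h mh by (simp add: U_def dot_square_norm)
  show ?thesis
    by (rule descent[OF K(1) gc gm h(1) w hw rK oU pU h(1)]) (auto simp: U_def dest: subsetD[OF interior_subset])
qed

lemma local_part:
  fixes K :: "'a::euclidean_space set" and g :: "real \<Rightarrow> real"
  assumes K: "closed K" "convex_cone K" "proper_cone K" "interior K \<noteq> {}"
    and gc: "continuous_on {0..pi} g" and gm: "strict_mono_on {0..pi} g"
    and w: "norm w = 1" and e: "e > 0"
    and lm: "\<forall>v\<in>sphere 0 1. dist v w < e \<longrightarrow> psi K g w \<le> psi K g v"
  shows "w \<in> dual_cone K \<union> uminus ` dual_cone K"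
proof (rule ccontr)
  assume nin: "w \<notin> dual_cone K \<union> uminus ` dual_cone K"
  then obtain u where u: "u \<in> K" "w \<bullet> u < 0" by (auto simp: dual_cone_def not_le)
  have "- w \<notin> dual_cone K" using nin by (metis UnCI image_eqI minus_minus)
  then obtain v where v: "v \<in> K" "w \<bullet> v > 0" by (auto simp: dual_cone_def not_le)
  obtain z where z: "z \<in> interior K" using K(4) by blast
  define t where "t = - (w \<bullet> u) / (2 * (\<bar>w \<bullet> z\<bar> + 1))"
  have t: "t > 0" unfolding t_def using u by (intro divide_pos_pos) auto
  define u' where "u' = u + t *\<^sub>R z"
  have u'int: "u' \<in> interior K"
    using int_add[OF K(2) int_scale[OF K(2) z t] u(1)] by (simp add: u'_def add.commute)
  have "t * (w \<bullet> z) \<le> t * \<bar>w \<bullet> z\<bar>" using t by (simp add: mult_left_mono)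
  also have "t * \<bar>w \<bullet> z\<bar> < - (w \<bullet> u)"
  proof -
    have "t * \<bar>w \<bullet> z\<bar> = - (w \<bullet> u) * (\<bar>w \<bullet> z\<bar> / (2 * (\<bar>w \<bullet> z\<bar> + 1)))" by (simp add: t_def)
    also have "\<dots> < - (w \<bullet> u) * 1"
      using u by (intro mult_strict_left_mono) (auto simp: field_simps)
    finally show ?thesis by simp
  qed
  finally have a_neg: "w \<bullet> u' < 0" by (simp add: u'_def inner_add_right)
  define a where "a = w \<bullet> u'"
  define b where "b = w \<bullet> v"
  have a: "a < 0" and b: "b > 0" using a_neg v by (auto simp: a_def b_def)
  define l0 where "l0 = - a / b"
  have l0: "l0 > 0" unfolding l0_def using a b by (intro divide_pos_pos) auto
  define k0 where "k0 = u' + l0 *\<^sub>R v"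
  have k0int: "k0 \<in> interior K"
    unfolding k0_def by (rule int_add[OF K(2) u'int convex_cone_scaleR[OF K(2) _ v(1)]]) (use l0 in simp)
  have "k0 \<noteq> 0" using k0int zero_notin_int[OF K(3)] by auto
  define c where "c = norm k0"
  have c: "c > 0" using \<open>k0 \<noteq> 0\<close> by (simp add: c_def)
  define \<eta> where "\<eta> = min l0 (min (c / (2 * (norm v + 1))) (e * c / (4 * (b + 1))))"
  have "c / (2 * (norm v + 1)) > 0" using c by (intro divide_pos_pos) (auto intro: add_nonneg_pos)
  then have eta: "\<eta> > 0" using l0 c e b by (simp add: \<eta>_def)
  have eta1: "\<eta> \<le> l0" "\<eta> \<le> c / (2 * (norm v + 1))" "\<eta> \<le> e * c / (4 * (b + 1))"
    by (simp_all add: \<eta>_def)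
  define k where "k = u' + (l0 - \<eta>) *\<^sub>R v"
  have kint: "k \<in> interior K"
    unfolding k_def by (rule int_add[OF K(2) u'int convex_cone_scaleR[OF K(2) _ v(1)]]) (use eta1 in simp)
  have kk0: "k = k0 - \<eta> *\<^sub>R v" by (simp add: k_def k0_def algebra_simps)
  have "w \<bullet> k0 = a + l0 * b" by (simp add: k0_def inner_add_right a_def b_def)
  then have wk0: "w \<bullet> k0 = 0" using b by (simp add: l0_def)
  have wk: "w \<bullet> k = - \<eta> * b" by (simp add: kk0 inner_diff_right wk0 b_def)
  have "\<eta> * norm v \<le> c / 2"
  proof -
    have "\<eta> * norm v \<le> c / (2 * (norm v + 1)) * norm v" using eta1(2) by (rule mult_right_mono) simp
    also have "\<dots> = c / 2 * (norm v / (norm v + 1))"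
      by (simp add: field_simps add_nonneg_pos)
    also have "\<dots> \<le> c / 2 * 1"
    proof (rule mult_left_mono)
      have "norm v + 1 > 0" by (simp add: add_nonneg_pos)
      then show "norm v / (norm v + 1) \<le> 1" by (simp add: divide_le_eq_1)
    qed (use c in simp)
    finally show ?thesis by simp
  qed
  moreover have "c - \<eta> * norm v \<le> norm k"
    using norm_triangle_ineq2[of k0 "\<eta> *\<^sub>R v"] eta by (simp add: kk0 c_def)
  ultimately have nk: "norm k \<ge> c / 2" by linarith
  then have nkp: "norm k > 0" using c by linarith
  define h where "h = k /\<^sub>R norm k"
  have h1: "norm h = 1" using nkp by (simp add: h_def)
  have hint: "h \<in> interior K" unfolding h_def using int_scale[OF K(2) kint, of "inverse (norm k)"] nkp by simp
  have hw: "h \<bullet> w = - \<eta> * b / norm k" using wk by (simp add: h_def inner_commute divide_inverse_commute)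
  have hwneg: "h \<bullet> w < 0" using eta b nkp by (simp add: hw divide_neg_pos mult_pos_pos)
  have habs: "\<bar>h \<bullet> w\<bar> = \<eta> * b / norm k" using eta b nkp by (simp add: hw)
  have bb1: "b / (b + 1) < 1" using b by simp
  have "\<eta> * b \<le> e * c / (4 * (b + 1)) * b" using eta1(3) b by (intro mult_right_mono) auto
  also have "\<dots> = e * c / 4 * (b / (b + 1))" by simp
  also have "\<dots> < e * c / 4 * 1" using e c bb1 by (intro mult_strict_left_mono) auto
  finally have etab: "\<eta> * b < e * c / 4" by simp
  have "e * c / 4 \<le> e / 2 * norm k" using nk e by (simp add: field_simps)
  with etab have "\<eta> * b < e / 2 * norm k" by linarith
  then have "\<eta> * b / norm k < e / 2" using nkp by (simp add: pos_divide_less_eq)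
  then have "\<bar>h \<bullet> w\<bar> < e / 2" using habs by simp
  then have d: "dist (rfl h w) w < e" by (simp add: dist_rfl[OF h1])
  have "rfl h w \<in> sphere 0 1" using rfl_norm[OF h1] w by simp
  then have "psi K g w \<le> psi K g (rfl h w)" using lm d by blast
  moreover have "psi K g (rfl h w) < psi K g w"
    by (rule descent_int[OF K(1,2,3) gc gm h1 hint w hwneg])
  ultimately show False by simp
qed

lemma global_in_K:
  fixes K :: "'a::euclidean_space set" and g :: "real \<Rightarrow> real"
  assumes K: "closed K" "convex_cone K" "proper_cone K" "interior K \<noteq> {}"
    and gc: "continuous_on {0..pi} g" and gm: "strict_mono_on {0..pi} g"
    and w: "norm w = 1"
    and gl: "\<forall>v\<in>sphere 0 1. psi K g w \<le> psi K g v"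
  shows "w \<in> K"
proof (rule ccontr)
  assume wK: "w \<notin> K"
  have cK: "convex K" using K(2) by (simp add: convex_cone_def)
  obtain a bb where ab: "a \<bullet> w < bb" "\<forall>x\<in>K. a \<bullet> x > bb"
    using separating_hyperplane_closed_point[OF cK K(1) wK] by blast
  have bb: "bb < 0" using ab(2) convex_cone_contains_0[OF K(2)] by force
  have ann: "a \<bullet> x \<ge> 0" if x: "x \<in> K" for x
  proof (rule ccontr)
    assume "\<not> a \<bullet> x \<ge> 0"
    then have ax: "a \<bullet> x < 0" by simp
    define s where "s = bb / (a \<bullet> x)"
    have s: "s \<ge> 0" using ax bb by (simp add: s_def divide_nonpos_neg)
    have "s *\<^sub>R x \<in> K" using convex_cone_scaleR[OF K(2) s x] .
    then have "a \<bullet> (s *\<^sub>R x) > bb" using ab by blast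
    moreover have "a \<bullet> (s *\<^sub>R x) = bb" using ax by (simp add: s_def)
    ultimately show False by simp
  qed
  have a0: "a \<noteq> 0" using ab(1) bb by auto
  define h where "h = a /\<^sub>R norm a"
  have h1: "norm h = 1" using a0 by (simp add: h_def)
  have hnn: "h \<bullet> y \<ge> 0" if "y \<in> K" for y using ann[OF that] a0 by (simp add: h_def)
  have "a \<bullet> w < 0" using ab(1) bb by linarith
  then have hw: "h \<bullet> w < 0" using a0 by (simp add: h_def mult_pos_neg)
  obtain z where z: "z \<in> interior K" using K(4) by blast
  have z0: "z \<noteq> 0" using z zero_notin_int[OF K(3)] by auto
  define p where "p = z /\<^sub>R norm z"
  have p: "p \<in> interior K" "norm p = 1"
    using int_scale[OF K(2) z, of "inverse (norm z)"] z0 by (simp_all add: p_def)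
  have "psi K g (rfl h w) < psi K g w"
  proof (rule descent[OF K(1) gc gm h1 w hw _ open_interior p])
    fix y assume "y \<in> K" "h \<bullet> y < 0"
    then show "rfl h y \<in> K" using hnn by force
  next
    fix y assume y: "y \<in> interior K" "norm y = 1"
    have yK: "y \<in> K" using y interior_subset by blast
    have hy: "h \<bullet> y > 0" by (rule pos_on_int[OF h1 hnn y(1)])
    have "h \<bullet> rfl h y < 0" using hy by (simp add: rfl_inner_h[OF h1])
    then have "rfl h y \<notin> K" using hnn by force
    then show "y \<in> K \<and> h \<bullet> y > 0 \<and> rfl h y \<notin> K" using yK hy by simp
  qed
  moreover have "rfl h w \<in> sphere 0 1" using rfl_norm[OF h1] w by simp
  ultimately show False using gl by force
qed

theorem mainTheorem5:
  fixes K :: "'a::euclidean_space set" and g :: "real \<Rightarrow> real"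
  assumes "closed K" and "convex_cone K" and "proper_cone K" and "interior K \<noteq> {}"
    and "continuous_on {0..pi} g" and "strict_mono_on {0..pi} g"
  shows "(\<forall>w\<in>sphere 0 1. (\<exists>e>0. \<forall>v\<in>sphere 0 1. dist v w < e \<longrightarrow> psi K g w \<le> psi K g v)
            \<longrightarrow> w \<in> dual_cone K \<union> uminus ` dual_cone K)
       \<and> (\<forall>w\<in>sphere 0 1. (\<forall>v\<in>sphere 0 1. psi K g w \<le> psi K g v)
            \<longrightarrow> w \<in> K \<inter> dual_cone K)"
proof (intro conjI ballI impI)
  fix w :: 'a assume w: "w \<in> sphere 0 1"
  assume "\<exists>e>0. \<forall>v\<in>sphere 0 1. dist v w < e \<longrightarrow> psi K g w \<le> psi K g v"
  then obtain e where "e > 0" "\<forall>v\<in>sphere 0 1. dist v w < e \<longrightarrow> psi K g w \<le> psi K g v" by blast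
  then show "w \<in> dual_cone K \<union> uminus ` dual_cone K"
    using local_part[OF assms] w by simp
next
  fix w :: 'a assume w: "w \<in> sphere 0 1"
  assume gl: "\<forall>v\<in>sphere 0 1. psi K g w \<le> psi K g v"
  have n1: "norm w = 1" using w by simp
  have "w \<in> dual_cone K \<union> uminus ` dual_cone K"
    using local_part[OF assms n1 zero_less_one] gl by blast
  moreover have wK: "w \<in> K" using global_in_K[OF assms n1 gl] .
  moreover have "w \<notin> uminus ` dual_cone K"
  proof
    assume "w \<in> uminus ` dual_cone K"
    then obtain d where d: "d \<in> dual_cone K" "w = - d" by blast
    then have "d \<bullet> w \<ge> 0" using wK by (auto simp: dual_cone_def)
    moreover have "w \<bullet> w = - (d \<bullet> w)" using d(2) by simp
    ultimately have "w \<bullet> w \<le> 0" by linarith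
    then show False using n1 by (simp add: dot_square_norm)
  qed
  ultimately show "w \<in> K \<inter> dual_cone K" by blast
qed


end
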